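(* Let $(\mathcal{T},\otimes,\mathbf{1})$ be an essentially small tensor triangulated category and $\mathcal{P}$ a radical ideal of $\mathcal{T}$. If $\mathcal{P}$ is a prime thick subcategory of $\mathcal{T}$, then $\mathcal{P}$ is a prime ideal of $\mathcal{T}$.
   Context: An ideal of $\mathcal{T}$ is a thick subcategory $\mathcal{I}$ with $M\otimes N\in\mathcal{I}$ for all $M\in\mathcal{T}$, $N\in\mathcal{I}$. The radical of an ideal $\mathcal{I}$ is $\sqrt{\mathcal{I}}:=\{M\in\mathcal{T}\mid M^{\otimes n}\in\mathcal{I}\text{ for some }n\ge0\}$; $\mathcal{I}$ is radical if $\sqrt{\mathcal{I}}=\mathcal{I}$. An ideal $\mathcal{P}$ is a prime ideal if $\mathcal{P}\neq\mathcal{T}$ and $M\otimes N\in\mathcal{P}$ implies $M\in\mathcal{P}$ or $N\in\mathcal{P}$. A thick subcategory $\mathcal{P}$ is a prime thick subcategory if among all thick subcategories $\mathcal{X}$ of $\mathcal{T}$ with $\mathcal{P}\subsetneq\mathcal{X}$ there is a unique minimal one. *)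

theory Defs
  imports Main
begin

text \<open>
  Objects have type 'o and
  morphisms type 'm (so the category is small).
\<close>

record ('o, 'm) ttcat =
  cdom   :: "'m \<Rightarrow> 'o"
  ccod   :: "'m \<Rightarrow> 'o"
  ccomp  :: "'m \<Rightarrow> 'm \<Rightarrow> 'm"       \<comment> \<open>ccomp g f = g after f\<close>
  cid    :: "'o \<Rightarrow> 'm"
  cadd   :: "'m \<Rightarrow> 'm \<Rightarrow> 'm"
  czm    :: "'o \<Rightarrow> 'o \<Rightarrow> 'm"       \<comment> \<open>zero morphism X \<rightarrow> Y\<close>
  cneg   :: "'m \<Rightarrow> 'm"
  czero  :: "'o"
  csh    :: "'o \<Rightarrow> 'o"
  cshm   :: "'m \<Rightarrow> 'm"
  ctri   :: "'m \<Rightarrow> 'm \<Rightarrow> 'm \<Rightarrow> bool" \<comment> \<open>distinguished triangles X \<rightarrow> Y \<rightarrow> Z \<rightarrow> \<Sigma>X\<close>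
  cten   :: "'o \<Rightarrow> 'o \<Rightarrow> 'o"
  ctenm  :: "'m \<Rightarrow> 'm \<Rightarrow> 'm"
  cunit  :: "'o"
  calpha :: "'o \<Rightarrow> 'o \<Rightarrow> 'o \<Rightarrow> 'm"
  clam   :: "'o \<Rightarrow> 'm"
  crho   :: "'o \<Rightarrow> 'm"
  csym   :: "'o \<Rightarrow> 'o \<Rightarrow> 'm"
  cthl   :: "'o \<Rightarrow> 'o \<Rightarrow> 'm"        \<comment> \<open>cthl N X : \<Sigma>X \<otimes> N \<rightarrow> \<Sigma>(X \<otimes> N)\<close>
  cthr   :: "'o \<Rightarrow> 'o \<Rightarrow> 'm"        \<comment> \<open>cthr N X : N \<otimes> \<Sigma>X \<rightarrow> \<Sigma>(N \<otimes> X)\<close>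

definition hom :: "('o,'m) ttcat \<Rightarrow> 'o \<Rightarrow> 'o \<Rightarrow> 'm set" where
  "hom C X Y = {f. cdom C f = X \<and> ccod C f = Y}"

definition is_iso :: "('o,'m) ttcat \<Rightarrow> 'm \<Rightarrow> bool" where
  "is_iso C f \<longleftrightarrow> (\<exists>g. g \<in> hom C (ccod C f) (cdom C f) \<and>
      ccomp C g f = cid C (cdom C f) \<and> ccomp C f g = cid C (ccod C f))"

definition isomorphic :: "('o,'m) ttcat \<Rightarrow> 'o \<Rightarrow> 'o \<Rightarrow> bool" where
  "isomorphic C X Y \<longleftrightarrow> (\<exists>f \<in> hom C X Y. is_iso C f)"

definition biproduct :: "('o,'m) ttcat \<Rightarrow> 'o \<Rightarrow> 'o \<Rightarrow> 'o \<Rightarrow> bool" where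
  "biproduct C X Y Z \<longleftrightarrow> (\<exists>i1 i2 p1 p2.
     i1 \<in> hom C X Z \<and> i2 \<in> hom C Y Z \<and> p1 \<in> hom C Z X \<and> p2 \<in> hom C Z Y \<and>
     ccomp C p1 i1 = cid C X \<and> ccomp C p2 i2 = cid C Y \<and>
     ccomp C p1 i2 = czm C Y X \<and> ccomp C p2 i1 = czm C X Y \<and>
     cadd C (ccomp C i1 p1) (ccomp C i2 p2) = cid C Z)"

definition is_tri :: "('o,'m) ttcat \<Rightarrow> 'm \<Rightarrow> 'm \<Rightarrow> 'm \<Rightarrow> bool" where
  "is_tri C f g h \<longleftrightarrow> (\<exists>X Y Z. f \<in> hom C X Y \<and> g \<in> hom C Y Z \<and> h \<in> hom C Z (csh C X))"

definition tri_mor :: "('o,'m) ttcat \<Rightarrow> 'm \<Rightarrow> 'm \<Rightarrow> 'm \<Rightarrow> 'm \<Rightarrow> 'm \<Rightarrow> 'm \<Rightarrow> 'm \<Rightarrow> 'm \<Rightarrow> 'm \<Rightarrow> bool" where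
  "tri_mor C f g h f' g' h' a b c \<longleftrightarrow>
     a \<in> hom C (cdom C f) (cdom C f') \<and> b \<in> hom C (ccod C f) (ccod C f') \<and>
     c \<in> hom C (ccod C g) (ccod C g') \<and>
     ccomp C b f = ccomp C f' a \<and> ccomp C c g = ccomp C g' b \<and>
     ccomp C (cshm C a) h = ccomp C h' c"

locale tt_category =
  fixes C :: "('o,'m) ttcat"
  assumes
    comp_hom: "\<And>f g X Y Z. f \<in> hom C X Y \<Longrightarrow> g \<in> hom C Y Z \<Longrightarrow> ccomp C g f \<in> hom C X Z"
  and id_hom: "\<And>X. cid C X \<in> hom C X X"
  and id_right: "\<And>f X Y. f \<in> hom C X Y \<Longrightarrow> ccomp C f (cid C X) = f"
  and id_left: "\<And>f X Y. f \<in> hom C X Y \<Longrightarrow> ccomp C (cid C Y) f = f"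
  and comp_assoc: "\<And>f g h W X Y Z. f \<in> hom C W X \<Longrightarrow> g \<in> hom C X Y \<Longrightarrow> h \<in> hom C Y Z \<Longrightarrow>
        ccomp C h (ccomp C g f) = ccomp C (ccomp C h g) f"
  and add_hom: "\<And>f g X Y. f \<in> hom C X Y \<Longrightarrow> g \<in> hom C X Y \<Longrightarrow> cadd C f g \<in> hom C X Y"
  and add_comm: "\<And>f g X Y. f \<in> hom C X Y \<Longrightarrow> g \<in> hom C X Y \<Longrightarrow> cadd C f g = cadd C g f"
  and add_assoc: "\<And>f g h X Y. f \<in> hom C X Y \<Longrightarrow> g \<in> hom C X Y \<Longrightarrow> h \<in> hom C X Y \<Longrightarrow>
        cadd C (cadd C f g) h = cadd C f (cadd C g h)"
  and zm_hom: "\<And>X Y. czm C X Y \<in> hom C X Y"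
  and add_zm: "\<And>f X Y. f \<in> hom C X Y \<Longrightarrow> cadd C f (czm C X Y) = f"
  and neg_hom: "\<And>f X Y. f \<in> hom C X Y \<Longrightarrow> cneg C f \<in> hom C X Y"
  and add_neg: "\<And>f X Y. f \<in> hom C X Y \<Longrightarrow> cadd C f (cneg C f) = czm C X Y"
  and comp_add_left: "\<And>f g h X Y Z. f \<in> hom C X Y \<Longrightarrow> g \<in> hom C X Y \<Longrightarrow> h \<in> hom C Y Z \<Longrightarrow>
        ccomp C h (cadd C f g) = cadd C (ccomp C h f) (ccomp C h g)"
  and comp_add_right: "\<And>f g k W X Y. f \<in> hom C X Y \<Longrightarrow> g \<in> hom C X Y \<Longrightarrow> k \<in> hom C W X \<Longrightarrow>
        ccomp C (cadd C f g) k = cadd C (ccomp C f k) (ccomp C g k)"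
  and zero_terminal: "\<And>X. hom C X (czero C) = {czm C X (czero C)}"
  and zero_initial: "\<And>X. hom C (czero C) X = {czm C (czero C) X}"
  and biproducts: "\<And>X Y. \<exists>Z. biproduct C X Y Z"
  and shm_hom: "\<And>f X Y. f \<in> hom C X Y \<Longrightarrow> cshm C f \<in> hom C (csh C X) (csh C Y)"
  and shm_id: "\<And>X. cshm C (cid C X) = cid C (csh C X)"
  and shm_comp: "\<And>f g X Y Z. f \<in> hom C X Y \<Longrightarrow> g \<in> hom C Y Z \<Longrightarrow>
        cshm C (ccomp C g f) = ccomp C (cshm C g) (cshm C f)"
  and shm_add: "\<And>f g X Y. f \<in> hom C X Y \<Longrightarrow> g \<in> hom C X Y \<Longrightarrow>
        cshm C (cadd C f g) = cadd C (cshm C f) (cshm C g)"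
  and shm_fully_faithful: "\<And>X Y. bij_betw (cshm C) (hom C X Y) (hom C (csh C X) (csh C Y))"
  and sh_ess_surj: "\<And>Y. \<exists>X. isomorphic C (csh C X) Y"
  and tri_typed: "\<And>f g h. ctri C f g h \<Longrightarrow> is_tri C f g h"
  and TR1_iso: "\<And>f g h f' g' h' a b c. ctri C f g h \<Longrightarrow> is_tri C f' g' h' \<Longrightarrow>
        tri_mor C f g h f' g' h' a b c \<Longrightarrow> is_iso C a \<Longrightarrow> is_iso C b \<Longrightarrow> is_iso C c \<Longrightarrow>
        ctri C f' g' h'"
  and TR1_id: "\<And>X. ctri C (cid C X) (czm C X (czero C)) (czm C (czero C) (csh C X))"
  and TR1_ext: "\<And>f X Y. f \<in> hom C X Y \<Longrightarrow> \<exists>g h. ctri C f g h"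
  and TR2_rot: "\<And>f g h. ctri C f g h \<Longrightarrow> ctri C g h (cneg C (cshm C f))"
  and TR2_unrot: "\<And>f g h X Y Z. f \<in> hom C X Y \<Longrightarrow> g \<in> hom C Y Z \<Longrightarrow> h \<in> hom C Z (csh C X) \<Longrightarrow>
        ctri C g h (cneg C (cshm C f)) \<Longrightarrow> ctri C f g h"
  and TR3: "\<And>f g h f' g' h' a b. ctri C f g h \<Longrightarrow> ctri C f' g' h' \<Longrightarrow>
        a \<in> hom C (cdom C f) (cdom C f') \<Longrightarrow> b \<in> hom C (ccod C f) (ccod C f') \<Longrightarrow>
        ccomp C b f = ccomp C f' a \<Longrightarrow> \<exists>c. tri_mor C f g h f' g' h' a b c"
  and TR4: "\<And>f g a1 b1 a2 b2 a3 b3 X Y Z. f \<in> hom C X Y \<Longrightarrow> g \<in> hom C Y Z \<Longrightarrow>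
        ctri C f a1 b1 \<Longrightarrow> ctri C g a2 b2 \<Longrightarrow> ctri C (ccomp C g f) a3 b3 \<Longrightarrow>
        \<exists>u v. u \<in> hom C (ccod C a1) (ccod C a3) \<and> v \<in> hom C (ccod C a3) (ccod C a2) \<and>
          ctri C u v (ccomp C (cshm C a1) b2) \<and>
          ccomp C u a1 = ccomp C a3 g \<and> ccomp C b3 u = b1 \<and>
          ccomp C v a3 = a2 \<and> ccomp C b2 v = ccomp C (cshm C f) b3"
  and tenm_hom: "\<And>f g X Y X' Y'. f \<in> hom C X Y \<Longrightarrow> g \<in> hom C X' Y' \<Longrightarrow>
        ctenm C f g \<in> hom C (cten C X X') (cten C Y Y')"
  and tenm_id: "\<And>X Y. ctenm C (cid C X) (cid C Y) = cid C (cten C X Y)"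
  and tenm_comp: "\<And>f g f' g' X Y Z X' Y' Z'. f \<in> hom C X Y \<Longrightarrow> g \<in> hom C Y Z \<Longrightarrow>
        f' \<in> hom C X' Y' \<Longrightarrow> g' \<in> hom C Y' Z' \<Longrightarrow>
        ctenm C (ccomp C g f) (ccomp C g' f') = ccomp C (ctenm C g g') (ctenm C f f')"
  and tenm_add_left: "\<And>f g h X Y X' Y'. f \<in> hom C X Y \<Longrightarrow> g \<in> hom C X Y \<Longrightarrow> h \<in> hom C X' Y' \<Longrightarrow>
        ctenm C (cadd C f g) h = cadd C (ctenm C f h) (ctenm C g h)"
  and tenm_add_right: "\<And>f g h X Y X' Y'. f \<in> hom C X Y \<Longrightarrow> g \<in> hom C X Y \<Longrightarrow> h \<in> hom C X' Y' \<Longrightarrow>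
        ctenm C h (cadd C f g) = cadd C (ctenm C h f) (ctenm C h g)"
  and alpha_hom: "\<And>X Y Z. calpha C X Y Z \<in> hom C (cten C (cten C X Y) Z) (cten C X (cten C Y Z))"
  and alpha_iso: "\<And>X Y Z. is_iso C (calpha C X Y Z)"
  and alpha_nat: "\<And>f g h X Y Z X' Y' Z'. f \<in> hom C X X' \<Longrightarrow> g \<in> hom C Y Y' \<Longrightarrow> h \<in> hom C Z Z' \<Longrightarrow>
        ccomp C (calpha C X' Y' Z') (ctenm C (ctenm C f g) h) =
        ccomp C (ctenm C f (ctenm C g h)) (calpha C X Y Z)"
  and lam_hom: "\<And>X. clam C X \<in> hom C (cten C (cunit C) X) X"
  and lam_iso: "\<And>X. is_iso C (clam C X)"
  and lam_nat: "\<And>f X Y. f \<in> hom C X Y \<Longrightarrow>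
        ccomp C (clam C Y) (ctenm C (cid C (cunit C)) f) = ccomp C f (clam C X)"
  and rho_hom: "\<And>X. crho C X \<in> hom C (cten C X (cunit C)) X"
  and rho_iso: "\<And>X. is_iso C (crho C X)"
  and rho_nat: "\<And>f X Y. f \<in> hom C X Y \<Longrightarrow>
        ccomp C (crho C Y) (ctenm C f (cid C (cunit C))) = ccomp C f (crho C X)"
  and sym_hom: "\<And>X Y. csym C X Y \<in> hom C (cten C X Y) (cten C Y X)"
  and sym_inv: "\<And>X Y. ccomp C (csym C Y X) (csym C X Y) = cid C (cten C X Y)"
  and sym_nat: "\<And>f g X Y X' Y'. f \<in> hom C X X' \<Longrightarrow> g \<in> hom C Y Y' \<Longrightarrow>
        ccomp C (csym C X' Y') (ctenm C f g) = ccomp C (ctenm C g f) (csym C X Y)"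
  and pentagon: "\<And>W X Y Z.
        ccomp C (calpha C W X (cten C Y Z)) (calpha C (cten C W X) Y Z) =
        ccomp C (ctenm C (cid C W) (calpha C X Y Z))
          (ccomp C (calpha C W (cten C X Y) Z) (ctenm C (calpha C W X Y) (cid C Z)))"
  and triangle: "\<And>X Y.
        ccomp C (ctenm C (cid C X) (clam C Y)) (calpha C X (cunit C) Y) =
        ctenm C (crho C X) (cid C Y)"
  and hexagon: "\<And>X Y Z.
        ccomp C (calpha C Y Z X) (ccomp C (csym C X (cten C Y Z)) (calpha C X Y Z)) =
        ccomp C (ctenm C (cid C Y) (csym C X Z))
          (ccomp C (calpha C Y X Z) (ctenm C (csym C X Y) (cid C Z)))"
  and thl_hom: "\<And>N X. cthl C N X \<in> hom C (cten C (csh C X) N) (csh C (cten C X N))"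
  and thl_iso: "\<And>N X. is_iso C (cthl C N X)"
  and thl_nat: "\<And>N f X Y. f \<in> hom C X Y \<Longrightarrow>
        ccomp C (cthl C N Y) (ctenm C (cshm C f) (cid C N)) =
        ccomp C (cshm C (ctenm C f (cid C N))) (cthl C N X)"
  and ten_exact_left: "\<And>N f g h X Y. f \<in> hom C X Y \<Longrightarrow> ctri C f g h \<Longrightarrow>
        ctri C (ctenm C f (cid C N)) (ctenm C g (cid C N))
               (ccomp C (cthl C N X) (ctenm C h (cid C N)))"
  and thr_hom: "\<And>N X. cthr C N X \<in> hom C (cten C N (csh C X)) (csh C (cten C N X))"
  and thr_iso: "\<And>N X. is_iso C (cthr C N X)"
  and thr_nat: "\<And>N f X Y. f \<in> hom C X Y \<Longrightarrow>
        ccomp C (cthr C N Y) (ctenm C (cid C N) (cshm C f)) =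
        ccomp C (cshm C (ctenm C (cid C N) f)) (cthr C N X)"
  and ten_exact_right: "\<And>N f g h X Y. f \<in> hom C X Y \<Longrightarrow> ctri C f g h \<Longrightarrow>
        ctri C (ctenm C (cid C N) f) (ctenm C (cid C N) g)
               (ccomp C (cthr C N X) (ctenm C (cid C N) h))"

text \<open>Thick subcategories (full, replete, triangulated, closed under direct summands),
  identified with their (replete) classes of objects.\<close>
definition thick :: "('o,'m) ttcat \<Rightarrow> 'o set \<Rightarrow> bool" where
  "thick C S \<longleftrightarrow>
     czero C \<in> S \<and>
     (\<forall>X Y. X \<in> S \<and> isomorphic C X Y \<longrightarrow> Y \<in> S) \<and>
     (\<forall>X. csh C X \<in> S \<longleftrightarrow> X \<in> S) \<and>
     (\<forall>f g h. ctri C f g h \<longrightarrow>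
        (cdom C f \<in> S \<and> ccod C f \<in> S \<longrightarrow> ccod C g \<in> S) \<and>
        (cdom C f \<in> S \<and> ccod C g \<in> S \<longrightarrow> ccod C f \<in> S) \<and>
        (ccod C f \<in> S \<and> ccod C g \<in> S \<longrightarrow> cdom C f \<in> S)) \<and>
     (\<forall>X Y Z. biproduct C X Y Z \<and> Z \<in> S \<longrightarrow> X \<in> S)"

definition tt_ideal :: "('o,'m) ttcat \<Rightarrow> 'o set \<Rightarrow> bool" where
  "tt_ideal C I \<longleftrightarrow> thick C I \<and> (\<forall>M N. N \<in> I \<longrightarrow> cten C M N \<in> I)"

primrec tpow :: "('o,'m) ttcat \<Rightarrow> 'o \<Rightarrow> nat \<Rightarrow> 'o" where
  "tpow C M 0 = cunit C"
| "tpow C M (Suc n) = cten C M (tpow C M n)"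

definition tt_radical :: "('o,'m) ttcat \<Rightarrow> 'o set \<Rightarrow> 'o set" where
  "tt_radical C I = {M. \<exists>n. tpow C M n \<in> I}"

definition is_radical :: "('o,'m) ttcat \<Rightarrow> 'o set \<Rightarrow> bool" where
  "is_radical C I \<longleftrightarrow> tt_radical C I = I"

definition prime_ideal :: "('o,'m) ttcat \<Rightarrow> 'o set \<Rightarrow> bool" where
  "prime_ideal C P \<longleftrightarrow> tt_ideal C P \<and> P \<noteq> UNIV \<and>
     (\<forall>M N. cten C M N \<in> P \<longrightarrow> M \<in> P \<or> N \<in> P)"

text \<open>Prime thick subcategory: among thick subcategories strictly containing P there
  is a smallest one (read "unique minimal" as "minimum").\<close>
definition prime_thick :: "('o,'m) ttcat \<Rightarrow> 'o set \<Rightarrow> bool" where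
  "prime_thick C P \<longleftrightarrow> thick C P \<and>
     (\<exists>Q. thick C Q \<and> P \<subset> Q \<and> (\<forall>X. thick C X \<and> P \<subset> X \<longrightarrow> Q \<subseteq> X))"

end

theory Submission
  imports Defs
begin

lemma thick_zero: "thick C S \<Longrightarrow> czero C \<in> S" unfolding thick_def by (elim conjE)
lemma thick_rep: "thick C S \<Longrightarrow> X \<in> S \<Longrightarrow> isomorphic C X Y \<Longrightarrow> Y \<in> S"
  unfolding thick_def by (elim conjE) blast
lemma thick_sh: "thick C S \<Longrightarrow> csh C X \<in> S \<longleftrightarrow> X \<in> S"
  unfolding thick_def by (elim conjE) blast
lemma thick_bp: "thick C S \<Longrightarrow> biproduct C X Y Z \<Longrightarrow> Z \<in> S \<Longrightarrow> X \<in> S"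
  unfolding thick_def by (elim conjE) blast
lemma thick_tri: "thick C S \<Longrightarrow> ctri C f g h \<Longrightarrow>
        (cdom C f \<in> S \<and> ccod C f \<in> S \<longrightarrow> ccod C g \<in> S) \<and>
        (cdom C f \<in> S \<and> ccod C g \<in> S \<longrightarrow> ccod C f \<in> S) \<and>
        (ccod C f \<in> S \<and> ccod C g \<in> S \<longrightarrow> cdom C f \<in> S)"
  unfolding thick_def by (elim conjE) blast
lemma thickI:
  assumes "czero C \<in> S" "\<And>X Y. X \<in> S \<Longrightarrow> isomorphic C X Y \<Longrightarrow> Y \<in> S"
   "\<And>X. csh C X \<in> S \<longleftrightarrow> X \<in> S"
   "\<And>f g h. ctri C f g h \<Longrightarrow>
        (cdom C f \<in> S \<and> ccod C f \<in> S \<longrightarrow> ccod C g \<in> S) \<and>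
        (cdom C f \<in> S \<and> ccod C g \<in> S \<longrightarrow> ccod C f \<in> S) \<and>
        (ccod C f \<in> S \<and> ccod C g \<in> S \<longrightarrow> cdom C f \<in> S)"
   "\<And>X Y Z. biproduct C X Y Z \<Longrightarrow> Z \<in> S \<Longrightarrow> X \<in> S"
  shows "thick C S"
  unfolding thick_def using assms by blast
lemma isomorphic_sym:
  assumes "isomorphic C X Y" shows "isomorphic C Y X"
proof -
  from assms obtain f g where f: "f \<in> hom C X Y" and g: "g \<in> hom C (ccod C f) (cdom C f)"
    and e1: "ccomp C g f = cid C (cdom C f)" and e2: "ccomp C f g = cid C (ccod C f)"
    unfolding isomorphic_def is_iso_def by blast
  have fx: "cdom C f = X" "ccod C f = Y" using f by (auto simp: hom_def)
  have g': "g \<in> hom C Y X" using g fx by simp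
  have "is_iso C g" unfolding is_iso_def
    using g' f e1 e2 fx by (auto simp: hom_def)
  thus ?thesis using g' unfolding isomorphic_def by blast
qed

context tt_category
begin

abbreviation F where "F A f \<equiv> ctenm C (cid C A) f"

lemma F_hom: "f \<in> hom C X Y \<Longrightarrow> F A f \<in> hom C (cten C A X) (cten C A Y)"
  by (rule tenm_hom[OF id_hom])

lemma F_comp: "f \<in> hom C X Y \<Longrightarrow> g \<in> hom C Y Z \<Longrightarrow>
   F A (ccomp C g f) = ccomp C (F A g) (F A f)"
proof -
  assume f: "f \<in> hom C X Y" and g: "g \<in> hom C Y Z"
  have "F A (ccomp C g f) = ctenm C (ccomp C (cid C A) (cid C A)) (ccomp C g f)"
    using id_left[OF id_hom] by simp
  also have "\<dots> = ccomp C (F A g) (F A f)"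
    by (rule tenm_comp[OF id_hom id_hom f g])
  finally show ?thesis .
qed

lemma F_iso: assumes "isomorphic C X Y" shows "isomorphic C (cten C A X) (cten C A Y)"
proof -
  from assms obtain f g where f: "f \<in> hom C X Y" and g: "g \<in> hom C (ccod C f) (cdom C f)"
    and e1: "ccomp C g f = cid C (cdom C f)" and e2: "ccomp C f g = cid C (ccod C f)"
    unfolding isomorphic_def is_iso_def by blast
  have fx: "cdom C f = X" "ccod C f = Y" using f by (auto simp: hom_def)
  have g': "g \<in> hom C Y X" using g fx by simp
  have Ff: "F A f \<in> hom C (cten C A X) (cten C A Y)" using F_hom[OF f] .
  have Fg: "F A g \<in> hom C (cten C A Y) (cten C A X)" using F_hom[OF g'] .
  have "ccomp C (F A g) (F A f) = cid C (cten C A X)"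
    using F_comp[OF f g', of A, symmetric] e1 fx tenm_id by simp
  moreover have "ccomp C (F A f) (F A g) = cid C (cten C A Y)"
    using F_comp[OF g' f, of A, symmetric] e2 fx tenm_id by simp
  ultimately have "is_iso C (F A f)" unfolding is_iso_def using Ff Fg by (auto simp: hom_def)
  thus ?thesis using Ff unfolding isomorphic_def by blast
qed

lemma F_zm: "F A (czm C X Y) = czm C (cten C A X) (cten C A Y)"
proof -
  let ?z = "czm C X Y"
  let ?H = "hom C (cten C A X) (cten C A Y)"
  have z: "?z \<in> hom C X Y" by (rule zm_hom)
  have Fz: "F A ?z \<in> ?H" using F_hom[OF z] .
  have "F A ?z = F A (cadd C ?z ?z)" using add_zm[OF z] by simp
  also have "\<dots> = cadd C (F A ?z) (F A ?z)" using tenm_add_right[OF z z id_hom] .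
  finally have eq: "F A ?z = cadd C (F A ?z) (F A ?z)" .
  have "czm C (cten C A X) (cten C A Y) = cadd C (F A ?z) (cneg C (F A ?z))"
    using add_neg[OF Fz] by simp
  also have "\<dots> = cadd C (cadd C (F A ?z) (F A ?z)) (cneg C (F A ?z))" using eq by simp
  also have "\<dots> = cadd C (F A ?z) (cadd C (F A ?z) (cneg C (F A ?z)))"
    using add_assoc[OF Fz Fz neg_hom[OF Fz]] .
  also have "\<dots> = F A ?z" using add_neg[OF Fz] add_zm[OF Fz] by simp
  finally show ?thesis by simp
qed

lemma F_biprod: assumes "biproduct C X Y Z"
  shows "biproduct C (cten C A X) (cten C A Y) (cten C A Z)"
proof -
  from assms obtain i1 i2 p1 p2 where h:
     "i1 \<in> hom C X Z" "i2 \<in> hom C Y Z" "p1 \<in> hom C Z X" "p2 \<in> hom C Z Y"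
     "ccomp C p1 i1 = cid C X" "ccomp C p2 i2 = cid C Y"
     "ccomp C p1 i2 = czm C Y X" "ccomp C p2 i1 = czm C X Y"
     "cadd C (ccomp C i1 p1) (ccomp C i2 p2) = cid C Z"
    unfolding biproduct_def by blast
  have c1: "ccomp C (F A i1) (F A p1) \<in> hom C (cten C A Z) (cten C A Z)"
    using comp_hom[OF F_hom F_hom] h by blast
  have "cadd C (ccomp C (F A i1) (F A p1)) (ccomp C (F A i2) (F A p2)) =
        cadd C (F A (ccomp C i1 p1)) (F A (ccomp C i2 p2))"
    using F_comp h by simp
  also have "\<dots> = F A (cadd C (ccomp C i1 p1) (ccomp C i2 p2))"
    using tenm_add_right[OF comp_hom comp_hom id_hom] h by metis
  also have "\<dots> = cid C (cten C A Z)" using h tenm_id by simp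
  finally have last: "cadd C (ccomp C (F A i1) (F A p1)) (ccomp C (F A i2) (F A p2)) = cid C (cten C A Z)" .
  have hh: "F A i1 \<in> hom C (cten C A X) (cten C A Z)" "F A i2 \<in> hom C (cten C A Y) (cten C A Z)"
    "F A p1 \<in> hom C (cten C A Z) (cten C A X)" "F A p2 \<in> hom C (cten C A Z) (cten C A Y)"
    using F_hom h(1-4) by blast+
  have e1: "ccomp C (F A p1) (F A i1) = cid C (cten C A X)"
    using F_comp[OF h(1) h(3), of A] h(5) tenm_id by simp
  have e2: "ccomp C (F A p2) (F A i2) = cid C (cten C A Y)"
    using F_comp[OF h(2) h(4), of A] h(6) tenm_id by simp
  have e3: "ccomp C (F A p1) (F A i2) = czm C (cten C A Y) (cten C A X)"
    using F_comp[OF h(2) h(3), of A] h(7) F_zm by simp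
  have e4: "ccomp C (F A p2) (F A i1) = czm C (cten C A X) (cten C A Y)"
    using F_comp[OF h(1) h(4), of A] h(8) F_zm by simp
  show ?thesis unfolding biproduct_def
    apply (rule exI[of _ "F A i1"], rule exI[of _ "F A i2"], rule exI[of _ "F A p1"], rule exI[of _ "F A p2"])
    using hh e1 e2 e3 e4 last by (intro conjI)
qed

lemma T_thick:
  assumes P: "tt_ideal C P"
  shows "thick C {X. cten C A X \<in> P}"
proof -
  have tP: "thick C P" using P unfolding tt_ideal_def by simp
  note rep = thick_rep[OF tP] and sh = thick_sh[OF tP] and bp = thick_bp[OF tP] and tr = thick_tri[OF tP]
  have z: "cten C A (czero C) \<in> P" using P thick_zero[OF tP] unfolding tt_ideal_def by blast
  have shi: "isomorphic C (cten C A (csh C X)) (csh C (cten C A X))" for X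
    using thr_hom thr_iso unfolding isomorphic_def by blast
  have shT: "cten C A (csh C X) \<in> P \<longleftrightarrow> cten C A X \<in> P" for X
  proof
    assume "cten C A (csh C X) \<in> P"
    hence "csh C (cten C A X) \<in> P" by (rule rep[OF _ shi])
    thus "cten C A X \<in> P" using sh by simp
  next
    assume "cten C A X \<in> P"
    hence "csh C (cten C A X) \<in> P" using sh by simp
    thus "cten C A (csh C X) \<in> P" by (rule rep[OF _ isomorphic_sym[OF shi]])
  qed
  show ?thesis
  proof (rule thickI)
    show "czero C \<in> {X. cten C A X \<in> P}" using z by simp
  next
    fix X Y assume "X \<in> {X. cten C A X \<in> P}" "isomorphic C X Y"
    thus "Y \<in> {X. cten C A X \<in> P}" using rep F_iso by blast
  next
    fix X show "(csh C X \<in> {X. cten C A X \<in> P}) = (X \<in> {X. cten C A X \<in> P})"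
      using shT by simp
  next
    fix X Y Z assume "biproduct C X Y Z" "Z \<in> {X. cten C A X \<in> P}"
    thus "X \<in> {X. cten C A X \<in> P}" using bp[OF F_biprod] by blast
  next
    fix f g h assume t: "ctri C f g h"
    obtain X Y Z where f: "f \<in> hom C X Y" and g: "g \<in> hom C Y Z" and "h \<in> hom C Z (csh C X)"
      using tri_typed[OF t] unfolding is_tri_def by blast
    have t2: "ctri C (F A f) (F A g) (ccomp C (cthr C A X) (F A h))"
      using ten_exact_right[OF f t] .
    have d: "cdom C (F A f) = cten C A X" "ccod C (F A f) = cten C A Y" "ccod C (F A g) = cten C A Z"
      using F_hom[OF f] F_hom[OF g] by (auto simp: hom_def)
    have d2: "cdom C f = X" "ccod C f = Y" "ccod C g = Z" using f g by (auto simp: hom_def)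
    show "(cdom C f \<in> {X. cten C A X \<in> P} \<and> ccod C f \<in> {X. cten C A X \<in> P} \<longrightarrow> ccod C g \<in> {X. cten C A X \<in> P}) \<and>
        (cdom C f \<in> {X. cten C A X \<in> P} \<and> ccod C g \<in> {X. cten C A X \<in> P} \<longrightarrow> ccod C f \<in> {X. cten C A X \<in> P}) \<and>
        (ccod C f \<in> {X. cten C A X \<in> P} \<and> ccod C g \<in> {X. cten C A X \<in> P} \<longrightarrow> cdom C f \<in> {X. cten C A X \<in> P})"
      using tr[OF t2] unfolding d d2 mem_Collect_eq .
  qed
qed

lemma sym_iso: "isomorphic C (cten C X Y) (cten C Y X)"
proof -
  have "is_iso C (csym C X Y)" unfolding is_iso_def
    using sym_hom[of X Y] sym_hom[of Y X] sym_inv[of X Y] sym_inv[of Y X] by (auto simp: hom_def)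
  thus ?thesis using sym_hom unfolding isomorphic_def by blast
qed

end

theorem proposition4p8:
  fixes C :: "('o, 'm) ttcat" and P :: "'o set"
  assumes "tt_category C"
    and "tt_ideal C P"
    and "is_radical C P"
    and "prime_thick C P"
  shows "prime_ideal C P"
proof -
  interpret tt_category C by fact
  have P: "tt_ideal C P" by fact
  have tP: "thick C P" using P unfolding tt_ideal_def by simp
  note rep = thick_rep[OF tP]
  have idl: "\<And>M N. N \<in> P \<Longrightarrow> cten C M N \<in> P" using P unfolding tt_ideal_def by simp
  have ex: "\<exists>Q. thick C Q \<and> P \<subset> Q \<and> (\<forall>X. thick C X \<and> P \<subset> X \<longrightarrow> Q \<subseteq> X)"
    using assms(4) unfolding prime_thick_def by (elim conjE)
  obtain Q where Qall: "thick C Q \<and> P \<subset> Q \<and> (\<forall>X. thick C X \<and> P \<subset> X \<longrightarrow> Q \<subseteq> X)"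
    by (rule exE[OF ex])
  have Q: "thick C Q" "P \<subset> Q" using Qall by simp_all
  have Qmin: "Q \<subseteq> X" if "thick C X" "P \<subset> X" for X
    using Qall that by simp
  have rad: "\<And>M n. tpow C M n \<in> P \<Longrightarrow> M \<in> P"
    using assms(3) unfolding is_radical_def tt_radical_def by blast
  have sub: "P \<subseteq> {X. cten C A X \<in> P}" for A using idl by blast
  have key: "Q \<subseteq> {X. cten C A X \<in> P}" if "B \<notin> P" "cten C A B \<in> P" for A B
  proof (rule Qmin[OF T_thick[OF P]])
    have "B \<in> {X. cten C A X \<in> P}" using that(2) by simp
    hence "{X. cten C A X \<in> P} \<noteq> P" using that(1) by auto
    thus "P \<subset> {X. cten C A X \<in> P}" using sub[of A] by auto
  qed
  have prime: "M \<in> P \<or> N \<in> P" if MN: "cten C M N \<in> P" for M N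
  proof (rule ccontr)
    assume "\<not> (M \<in> P \<or> N \<in> P)"
    hence nM: "M \<notin> P" and nN: "N \<notin> P" by auto
    obtain q where q: "q \<in> Q" "q \<notin> P" using Q(2) by blast
    have "cten C M q \<in> P" using key[OF nN MN] q by blast
    hence "cten C q M \<in> P" by (rule rep[OF _ sym_iso])
    hence "cten C q q \<in> P" using key[OF nM] q by blast
    moreover have "isomorphic C (cten C q (cten C q (cunit C))) (cten C q q)"
    proof -
      have "isomorphic C (cten C q (cunit C)) q" using rho_hom rho_iso unfolding isomorphic_def by blast
      thus ?thesis by (rule F_iso)
    qed
    ultimately have "cten C q (cten C q (cunit C)) \<in> P" using rep[OF _ isomorphic_sym] by blast
    hence "tpow C q 2 \<in> P" by (simp add: numeral_2_eq_2)
    hence "q \<in> P" by (rule rad)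
    with q show False by blast
  qed
  have "P \<noteq> UNIV" using Q(2) by blast
  thus ?thesis unfolding prime_ideal_def using P prime by blast
qed

end
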